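(* Let $S$ be finite and $X\subset S^{\mathbb Z^d}$ a $\mathbb Z^d$-topological Markov shift satisfying condition $\maltese$. Then $X$ satisfies condition $\mho$.
   Context: Notation: $\|n\|=\max_k|n_k|$, $B(n,r)=\{k:\|k-n\|\le r\}$, $F^o=\{x\in F:B(x,1)\subset F\}$, $\partial F=F\setminus F^o$; $X_\Lambda=\{x_\Lambda:x\in X\}$. A $\mathbb Z^d$-TMS is $X=\{x\in S^{\mathbb Z^d}:(x_k,(x_{k+j})_{j\in\partial B(0,1)})\in A\ \forall k\}$ for some $A\subset S\times S^{\partial B(0,1)}$. Tail relation $\mathfrak T(X)=\{(x,y)\in X^2:\exists F\text{ finite},x_{F^c}=y_{F^c}\}$. Let $\sharp:S\to\mathbb Z^S$, $\sharp(s)=e_s$ (standard basis vector), $\Psi_\sharp(x,y)=\sum_j(e_{y_j}-e_{x_j})$ on $\mathfrak T(X)$, and for finite $F$, $a,b\in X_F$, $\Psi_\sharp(a,b)=\sum_{j\in F}(e_{b_j}-e_{a_j})$; $\mathbb H_{X,\sharp}$ is the subgroup generated by $\{\Psi_\sharp(x,y):(x,y)\in\mathfrak T(X)\}$. Condition $\mho$: there is a finite $F\subset\mathbb Z^d$ such that for every $a\in X_F$, the subgroup generated by $\{\Psi_\sharp(a,b):b\in X_F,\ a_{\partial F}=b_{\partial F}\}$ equals $\mathbb H_{X,\sharp}$. Condition $\maltese$: $S=W\uplus Z$ with $Z\neq\emptyset$ such that (i) for every $x\in X$ and $z\in Z$, the configuration $x'$ with $x'_i=x_i$ for $i\neq0$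 and $x'_0=z$ lies in $X$; and (ii) if $a\in X_{[-1,1]^d}$ and $a_i\in Z$ for all $i\in[-1,1]^d\setminus\{0\}$, then for every $s\in S$ the configuration $a^{(s)}$ with $a^{(s)}_i=a_i$ for $i\neq0$ and $a^{(s)}_0=s$ lies in $X_{[-1,1]^d}$. *)

theory Defs
  imports "HOL-Library.FuncSet"
begin

text \<open>Lattice points of Z^d are functions 'd \<Rightarrow> int for a finite index type 'd
  (so d = CARD('d)); configurations are functions (('d \<Rightarrow> int) \<Rightarrow> 's),
  where the finite alphabet S is the finite type 's.\<close>

definition lnorm :: "('d::finite \<Rightarrow> int) \<Rightarrow> int" where
  "lnorm n = Max (range (\<lambda>k. \<bar>n k\<bar>))"

definition lball :: "('d::finite \<Rightarrow> int) \<Rightarrow> int \<Rightarrow> ('d \<Rightarrow> int) set" where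
  "lball n r = {k. lnorm (\<lambda>i. k i - n i) \<le> r}"

definition lint :: "('d::finite \<Rightarrow> int) set \<Rightarrow> ('d \<Rightarrow> int) set" where
  "lint F = {x \<in> F. lball x 1 \<subseteq> F}"

definition lbdry :: "('d::finite \<Rightarrow> int) set \<Rightarrow> ('d \<Rightarrow> int) set" where
  "lbdry F = F - lint F"

definition proj :: "(('d \<Rightarrow> int) \<Rightarrow> 's) set \<Rightarrow> ('d \<Rightarrow> int) set \<Rightarrow> (('d \<Rightarrow> int) \<Rightarrow> 's) set" where
  "proj X L = (\<lambda>x. restrict x L) ` X"

text \<open>The TMS defined by A \<subseteq> S \<times> S^{\<partial>B(0,1)}; elements of S^{\<partial>B(0,1)} are
  functions restricted (undefined outside) to \<partial>B(0,1).\<close>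
definition TMS :: "('s \<times> (('d::finite \<Rightarrow> int) \<Rightarrow> 's)) set \<Rightarrow> (('d \<Rightarrow> int) \<Rightarrow> 's) set" where
  "TMS A = {x. \<forall>k. (x k, restrict (\<lambda>j. x (\<lambda>i. k i + j i)) (lbdry (lball (\<lambda>_. 0) 1))) \<in> A}"

definition is_TMS :: "(('d::finite \<Rightarrow> int) \<Rightarrow> 's) set \<Rightarrow> bool" where
  "is_TMS X \<longleftrightarrow> (\<exists>A \<subseteq> UNIV \<times> extensional_funcset (lbdry (lball (\<lambda>_. 0) 1)) UNIV. X = TMS A)"

definition tail_rel :: "(('d \<Rightarrow> int) \<Rightarrow> 's) set \<Rightarrow> ((('d \<Rightarrow> int) \<Rightarrow> 's) \<times> (('d \<Rightarrow> int) \<Rightarrow> 's)) set" where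
  "tail_rel X = {(x, y). x \<in> X \<and> y \<in> X \<and> (\<exists>F. finite F \<and> (\<forall>j. j \<notin> F \<longrightarrow> x j = y j))}"

definition PsiF :: "('d \<Rightarrow> int) set \<Rightarrow> (('d \<Rightarrow> int) \<Rightarrow> 's) \<Rightarrow> (('d \<Rightarrow> int) \<Rightarrow> 's) \<Rightarrow> ('s \<Rightarrow> int)" where
  "PsiF F a b = (\<lambda>s. \<Sum>j\<in>F. (if b j = s then 1 else 0) - (if a j = s then 1 else 0))"

text \<open>\<Psi>_\<sharp>(x,y) for tail-related x,y: the sum over all j, whose nonzero terms lie in the
  finite set where x and y differ.\<close>
definition Psi :: "(('d \<Rightarrow> int) \<Rightarrow> 's) \<Rightarrow> (('d \<Rightarrow> int) \<Rightarrow> 's) \<Rightarrow> ('s \<Rightarrow> int)" where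
  "Psi x y = PsiF {j. x j \<noteq> y j} x y"

inductive_set gen_subgroup :: "('s \<Rightarrow> int) set \<Rightarrow> ('s \<Rightarrow> int) set" for G where
  base: "g \<in> G \<Longrightarrow> g \<in> gen_subgroup G"
| zero: "(\<lambda>_. 0) \<in> gen_subgroup G"
| diff: "a \<in> gen_subgroup G \<Longrightarrow> b \<in> gen_subgroup G \<Longrightarrow> (\<lambda>s. a s - b s) \<in> gen_subgroup G"

definition HX :: "(('d \<Rightarrow> int) \<Rightarrow> 's) set \<Rightarrow> ('s \<Rightarrow> int) set" where
  "HX X = gen_subgroup {Psi x y | x y. (x, y) \<in> tail_rel X}"

definition cond_mho :: "(('d::finite \<Rightarrow> int) \<Rightarrow> 's) set \<Rightarrow> bool" where
  "cond_mho X \<longleftrightarrow> (\<exists>F. finite F \<and> (\<forall>a \<in> proj X F.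
     gen_subgroup {PsiF F a b | b. b \<in> proj X F \<and> (\<forall>j \<in> lbdry F. a j = b j)} = HX X))"

definition cond_maltese :: "(('d::finite \<Rightarrow> int) \<Rightarrow> 's) set \<Rightarrow> bool" where
  "cond_maltese X \<longleftrightarrow> (\<exists>W Z. W \<inter> Z = {} \<and> W \<union> Z = UNIV \<and> Z \<noteq> {} \<and>
     (\<forall>x \<in> X. \<forall>z \<in> Z. x((\<lambda>_. 0) := z) \<in> X) \<and>
     (\<forall>a \<in> proj X (lball (\<lambda>_. 0) 1). (\<forall>i \<in> lball (\<lambda>_. 0) 1 - {(\<lambda>_. 0)}. a i \<in> Z) \<longrightarrow>
        (\<forall>s. a((\<lambda>_. 0) := s) \<in> proj X (lball (\<lambda>_. 0) 1))))"

end

theory Submission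
  imports Defs
begin

lemma lnorm_le: "lnorm (n::'d::finite \<Rightarrow> int) \<le> r \<longleftrightarrow> (\<forall>i. \<bar>n i\<bar> \<le> r)"
  unfolding lnorm_def by (subst Max_le_iff) auto

lemma lball_eq: "lball (c::'d::finite \<Rightarrow> int) r = {k. \<forall>i. \<bar>k i - c i\<bar> \<le> r}"
  by (simp add: lball_def lnorm_le)

lemma int_interval_abs: "((x::int) \<in> {-r..r}) = (\<bar>x\<bar> \<le> r)"
  by auto

lemma finite_lball0: "finite (lball (\<lambda>_. 0::int) r :: ('d::finite \<Rightarrow> int) set)"
proof -
  have "lball (\<lambda>_. 0::int) r \<subseteq> (PiE UNIV (\<lambda>_. {-r..r}) :: ('d \<Rightarrow> int) set)"
  proof
    fix k :: "'d \<Rightarrow> int" assume "k \<in> lball (\<lambda>_. 0::int) r"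
    then have *: "\<forall>i. \<bar>k i\<bar> \<le> r" by (simp add: lball_eq)
    have "k i \<in> {-r..r}" for i
    proof -
      have "\<bar>k i\<bar> \<le> r" using * by blast
      then show ?thesis by auto
    qed
    then show "k \<in> PiE UNIV (\<lambda>_. {-r..r})" by (simp add: PiE_UNIV_domain Pi_iff)
  qed
  moreover have "finite (PiE UNIV (\<lambda>_. {-r..r}) :: ('d \<Rightarrow> int) set)"
    by (rule finite_PiE) auto
  ultimately show ?thesis by (rule finite_subset)
qed

lemma gen_neg: "a \<in> gen_subgroup G \<Longrightarrow> (\<lambda>s. - a s) \<in> gen_subgroup G"
  using gen_subgroup.diff[OF gen_subgroup.zero, of a G] by simp

lemma gen_add: "a \<in> gen_subgroup G \<Longrightarrow> b \<in> gen_subgroup G \<Longrightarrow> (\<lambda>s. a s + b s) \<in> gen_subgroup G"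
  using gen_subgroup.diff[of a G "\<lambda>s. - b s"] gen_neg[of b G] by simp

lemma gen_mono1: assumes "G \<subseteq> gen_subgroup H" shows "g \<in> gen_subgroup G \<Longrightarrow> g \<in> gen_subgroup H"
  by (induction rule: gen_subgroup.induct) (use assms in \<open>auto intro: gen_subgroup.intros\<close>)

lemma gen_mono: "G \<subseteq> gen_subgroup H \<Longrightarrow> gen_subgroup G \<subseteq> gen_subgroup H"
  using gen_mono1 by blast

lemma PsiF_gen:
  assumes "finite D" "\<forall>j\<in>D. a j \<in> S \<and> b j \<in> S"
  shows "PsiF D a b \<in> gen_subgroup ((\<lambda>s t. (if t = s then 1 else 0) - (if t = z then 1 else (0::int))) ` S)"
  using assms
proof (induction D rule: finite_induct)
  case empty
  then show ?case using gen_subgroup.zero by (simp add: PsiF_def)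
next
  case (insert j D)
  let ?g = "\<lambda>s t. (if t = s then 1 else 0) - (if t = z then 1 else (0::int))"
  have eq: "PsiF (insert j D) a b = (\<lambda>t. PsiF D a b t + (?g (b j) t - ?g (a j) t))"
    using insert(1,2) by (auto simp: PsiF_def fun_eq_iff)
  have p: "PsiF D a b \<in> gen_subgroup (?g ` S)" using insert by auto
  have "?g (b j) \<in> gen_subgroup (?g ` S)" "?g (a j) \<in> gen_subgroup (?g ` S)"
    using insert(4) by (auto intro: gen_subgroup.base)
  then have d: "(\<lambda>t. ?g (b j) t - ?g (a j) t) \<in> gen_subgroup (?g ` S)"
    by (rule gen_subgroup.diff)
  show ?case unfolding eq using gen_add[OF p d] by simp
qed

lemma TMS_shift:
  assumes "x \<in> TMS A"
  shows "(\<lambda>n. x (\<lambda>i. n i + k i)) \<in> TMS A"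
  unfolding TMS_def
proof (intro CollectI allI)
  fix m :: "'a \<Rightarrow> int"
  have "(x (\<lambda>i. m i + k i), restrict (\<lambda>j. x (\<lambda>i. m i + k i + j i)) (lbdry (lball (\<lambda>_. 0) 1))) \<in> A"
    using assms unfolding TMS_def by auto
  moreover have "(\<lambda>j. x (\<lambda>i. m i + k i + j i)) = (\<lambda>j. x (\<lambda>i. m i + j i + k i))"
    by (simp add: ac_simps)
  ultimately show "((\<lambda>n. x (\<lambda>i. n i + k i)) m, restrict (\<lambda>j. (\<lambda>n. x (\<lambda>i. n i + k i)) (\<lambda>i. m i + j i)) (lbdry (lball (\<lambda>_. 0) 1))) \<in> A"
    by simp
qed

lemma TMS_local:
  assumes "\<forall>k. \<exists>v \<in> TMS A. v k = y k \<and> (\<forall>j \<in> lbdry (lball (\<lambda>_. 0) 1). v (\<lambda>i. k i + j i) = y (\<lambda>i. k i + j i))"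
  shows "y \<in> TMS A"
  unfolding TMS_def
proof (intro CollectI allI)
  fix k
  obtain v where v: "v \<in> TMS A" "v k = y k" "\<forall>j \<in> lbdry (lball (\<lambda>_. 0) 1). v (\<lambda>i. k i + j i) = y (\<lambda>i. k i + j i)"
    using assms by blast
  have "restrict (\<lambda>j. v (\<lambda>i. k i + j i)) (lbdry (lball (\<lambda>_. 0) 1)) = restrict (\<lambda>j. y (\<lambda>i. k i + j i)) (lbdry (lball (\<lambda>_. 0) 1))"
    using v(3) by (intro restrict_ext) auto
  moreover have "(v k, restrict (\<lambda>j. v (\<lambda>i. k i + j i)) (lbdry (lball (\<lambda>_. 0) 1))) \<in> A"
    using v(1) unfolding TMS_def by blast
  ultimately show "(y k, restrict (\<lambda>j. y (\<lambda>i. k i + j i)) (lbdry (lball (\<lambda>_. 0) 1))) \<in> A"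
    using v(2) by simp
qed

lemma set_z:
  assumes XA: "X = TMS A" and m1: "\<forall>x\<in>X. \<forall>z\<in>Z. x((\<lambda>_. 0) := z) \<in> X"
    and x: "x \<in> X" and z: "z \<in> Z"
  shows "x(k := z) \<in> X"
proof -
  define u where "u = (\<lambda>n. x (\<lambda>i. n i + k i))"
  have "u \<in> X" using x TMS_shift[of x A k] XA unfolding u_def by simp
  then have "u((\<lambda>_. 0) := z) \<in> X" using m1 z by blast
  then have "(\<lambda>n. (u((\<lambda>_. 0) := z)) (\<lambda>i. n i + - k i)) \<in> X" using TMS_shift[of "u((\<lambda>_. 0) := z)" A "\<lambda>i. - k i"] XA by simp
  moreover have "(\<lambda>n. (u((\<lambda>_. 0) := z)) (\<lambda>i. n i + - k i)) = x(k := z)"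
  proof
    fix n
    have "((\<lambda>i. n i + - k i) = (\<lambda>_. 0)) = (n = k)" by (auto simp: fun_eq_iff)
    then show "(u((\<lambda>_. 0) := z)) (\<lambda>i. n i + - k i) = (x(k := z)) n"
      by (auto simp: u_def)
  qed
  ultimately show ?thesis by simp
qed

lemma set_z_fin:
  assumes XA: "X = TMS A" and m1: "\<forall>x\<in>X. \<forall>z\<in>Z. x((\<lambda>_. 0) := z) \<in> X"
    and x: "x \<in> X" and z: "z \<in> Z" and D: "finite D"
  shows "(\<lambda>n. if n \<in> D then z else x n) \<in> X"
  using D
proof (induction D rule: finite_induct)
  case empty
  then show ?case using x by simp
next
  case (insert k D)
  have "(\<lambda>n. if n \<in> D then z else x n)(k := z) \<in> X"
    using set_z[OF XA m1 insert(3) z] .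
  moreover have "(\<lambda>n. if n \<in> D then z else x n)(k := z) = (\<lambda>n. if n \<in> insert k D then z else x n)"
    by auto
  ultimately show ?case by simp
qed

theorem proposition3p2:
  fixes X :: "(('d::finite \<Rightarrow> int) \<Rightarrow> 's::finite) set"
  assumes "is_TMS X"
    and "cond_maltese X"
  shows "cond_mho X"
proof -
  obtain A where XA: "X = TMS A" using assms(1) unfolding is_TMS_def by blast
  obtain Z where Zne: "Z \<noteq> {}" and m1: "\<forall>x\<in>X. \<forall>z\<in>Z. x((\<lambda>_. 0) := z) \<in> X"
    using assms(2) unfolding cond_maltese_def by blast
  obtain z where z: "z \<in> Z" using Zne by blast
  define S' where "S' = {x n | x n. x \<in> X}"
  define g where "g = (\<lambda>s t. (if t = s then 1 else 0) - (if t = z then 1 else (0::int)))"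
  define E where "E = g ` S'"
  define F :: "('d \<Rightarrow> int) set" where "F = lball (\<lambda>_. 0) 3"
  have finF: "finite F" using finite_lball0 F_def by simp
  have HE: "HX X \<subseteq> gen_subgroup E"
    unfolding HX_def
  proof (rule gen_mono, rule subsetI)
    fix v assume "v \<in> {Psi x y | x y. (x,y) \<in> tail_rel X}"
    then obtain x y D where xy: "x \<in> X" "y \<in> X" "finite D" "\<forall>j. j \<notin> D \<longrightarrow> x j = y j" "v = Psi x y"
      unfolding tail_rel_def by blast
    have fin: "finite {j. x j \<noteq> y j}" using xy(3,4)
      by (metis (mono_tags) finite_subset mem_Collect_eq subsetI)
    have "PsiF {j. x j \<noteq> y j} x y \<in> gen_subgroup E" unfolding E_def g_def
      by (rule PsiF_gen[OF fin]) (use xy(1,2) in \<open>auto simp: S'_def\<close>)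
    then show "v \<in> gen_subgroup E" using xy(5) by (simp add: Psi_def)
  qed
  have EH: "gen_subgroup E \<subseteq> HX X"
    unfolding HX_def
  proof (rule gen_mono, rule subsetI)
    fix v assume "v \<in> E"
    then obtain s w n where s: "v = g s" "w \<in> X" "w n = s" unfolding E_def S'_def by blast
    define y where "y = w(n := z)"
    have y: "y \<in> X" using set_z[OF XA m1 s(2) z] y_def by simp
    have tr: "(w, y) \<in> tail_rel X" unfolding tail_rel_def using s(2) y
      by (auto simp: y_def intro!: exI[of _ "{n}"])
    have veq: "v = (\<lambda>t. 0 - Psi w y t)"
    proof (cases "s = z")
      case True
      then have "{j. w j \<noteq> y j} = {}" using s by (auto simp: y_def)
      then show ?thesis using True by (simp add: s(1) g_def Psi_def PsiF_def)
    next
      case False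
      then have "{j. w j \<noteq> y j} = {n}" using s by (auto simp: y_def)
      then show ?thesis using False s by (auto simp: g_def Psi_def PsiF_def y_def fun_eq_iff)
    qed
    have "Psi w y \<in> gen_subgroup {Psi x y | x y. (x,y) \<in> tail_rel X}"
      using tr by (auto intro: gen_subgroup.base)
    from gen_subgroup.diff[OF gen_subgroup.zero this]
    show "v \<in> gen_subgroup {Psi x y | x y. (x,y) \<in> tail_rel X}" using veq by simp
  qed
  have Nb: "\<bar>j i\<bar> \<le> 1" if "j \<in> lbdry (lball (\<lambda>_. 0) 1)" for j :: "'d \<Rightarrow> int" and i
    using that by (auto simp: lbdry_def lball_eq)
  define B2 where "B2 = (lball (\<lambda>_. 0) 2 :: ('d\<Rightarrow>int) set)"
  have finB2: "finite B2" using finite_lball0 B2_def by simp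
  have B2eq: "m \<in> B2 \<longleftrightarrow> (\<forall>i. \<bar>m i\<bar> \<le> 2)" for m by (simp add: B2_def lball_eq)
  have bd: "j \<notin> B2" if "j \<in> lbdry F" for j
  proof
    assume "j \<in> B2"
    have jF: "j \<in> F" using that by (simp add: lbdry_def)
    have "lball j 1 \<subseteq> F"
    proof
      fix k assume "k \<in> lball j 1"
      then have h1: "\<bar>k i - j i\<bar> \<le> 1" for i by (simp add: lball_eq)
      have h2: "\<bar>j i\<bar> \<le> 2" for i using \<open>j \<in> B2\<close> B2eq by blast
      have "\<bar>k i\<bar> \<le> 3" for i using h1[of i] h2[of i] by linarith
      then show "k \<in> F" by (simp add: F_def lball_eq)
    qed
    then have "j \<in> lint F" using jF by (simp add: lint_def)
    then show False using that by (simp add: lbdry_def)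
  qed
  have zB2: "(\<lambda>_. 0) \<in> B2" by (simp add: B2eq)
  have zF: "(\<lambda>_. 0) \<in> F" by (simp add: F_def lball_eq)
  show ?thesis unfolding cond_mho_def
  proof (intro exI[of _ F] conjI ballI finF)
    fix a assume "a \<in> proj X F"
    then obtain x where x: "x \<in> X" "a = restrict x F" unfolding proj_def by blast
    let ?G = "{PsiF F a b | b. b \<in> proj X F \<and> (\<forall>j \<in> lbdry F. a j = b j)}"
    have GE: "gen_subgroup ?G \<subseteq> gen_subgroup E"
    proof (rule gen_mono, rule subsetI)
      fix v assume "v \<in> ?G"
      then obtain y where y: "y \<in> X" "v = PsiF F a (restrict y F)" unfolding proj_def by blast
      have "PsiF F a (restrict y F) \<in> gen_subgroup E" unfolding E_def g_def
        by (rule PsiF_gen[OF finF]) (use x y in \<open>auto simp: S'_def\<close>)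
      then show "v \<in> gen_subgroup E" using y by simp
    qed
    have EG: "gen_subgroup E \<subseteq> gen_subgroup ?G"
    proof (rule gen_mono, rule subsetI)
      fix v assume "v \<in> E"
      then obtain s w n where s: "v = g s" "w \<in> X" "w n = s" unfolding E_def S'_def by blast
      define w0 where "w0 = (\<lambda>m. w (\<lambda>i. m i + n i))"
      have w0: "w0 \<in> X" "w0 (\<lambda>_. 0) = s" using TMS_shift[of w A n] XA s by (auto simp: w0_def)
      define w1 where "w1 = (\<lambda>m. if m \<in> B2 - {\<lambda>_. 0} then z else w0 m)"
      have w1: "w1 \<in> X" unfolding w1_def using set_z_fin[OF XA m1 w0(1) z, of "B2 - {\<lambda>_. 0}"] finB2 by simp
      define y1 where "y1 = (\<lambda>m. if m \<in> B2 then z else x m)"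
      have y1: "y1 \<in> X" unfolding y1_def using set_z_fin[OF XA m1 x(1) z finB2] .
      define y2 where "y2 = y1((\<lambda>_. 0) := s)"
      have y2: "y2 \<in> X"
        unfolding XA
      proof (rule TMS_local, rule allI)
        fix k :: "'d \<Rightarrow> int"
        show "\<exists>v\<in>TMS A. v k = y2 k \<and> (\<forall>j\<in>lbdry (lball (\<lambda>_. 0) 1). v (\<lambda>i. k i + j i) = y2 (\<lambda>i. k i + j i))"
        proof (cases "\<forall>i. \<bar>k i\<bar> \<le> 1")
          case True
          have agree: "w1 m = y2 m" if "\<forall>i. \<bar>m i\<bar> \<le> 2" for m
            using that w0(2) by (auto simp: w1_def y2_def y1_def B2eq)
          have "\<forall>i. \<bar>k i\<bar> \<le> 2"
          proof
            fix i show "\<bar>k i\<bar> \<le> 2" using True[rule_format, of i] by linarith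
          qed
          moreover have "\<forall>i. \<bar>k i + j i\<bar> \<le> 2" if "j \<in> lbdry (lball (\<lambda>_. 0) 1)" for j
          proof
            fix i show "\<bar>k i + j i\<bar> \<le> 2" using Nb[OF that, of i] True[rule_format, of i] by linarith
          qed
          ultimately show ?thesis using w1 XA agree by (intro bexI[of _ w1]) auto
        next
          case False
          then obtain i0 where i0: "\<bar>k i0\<bar> > 1" using not_le by blast
          have "k \<noteq> (\<lambda>_. 0)" using i0 by auto
          moreover have "(\<lambda>i. k i + j i) \<noteq> (\<lambda>_. 0)" if "j \<in> lbdry (lball (\<lambda>_. 0) 1)" for j
          proof
            assume "(\<lambda>i. k i + j i) = (\<lambda>_. 0)"
            then have "k i0 + j i0 = 0" by (metis)
            then show False using Nb[OF that, of i0] i0 by linarith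
          qed
          ultimately show ?thesis using y1 XA by (intro bexI[of _ y1]) (auto simp: y2_def)
        qed
      qed
      have P1: "PsiF F a (restrict y1 F) \<in> ?G"
        using y1 bd x by (auto simp: proj_def y1_def lbdry_def)
      have P2: "PsiF F a (restrict y2 F) \<in> ?G"
      proof -
        have "\<forall>j\<in>lbdry F. a j = restrict y2 F j"
        proof
          fix j assume j: "j \<in> lbdry F"
          then have "j \<notin> B2" "j \<in> F" using bd by (auto simp: lbdry_def)
          moreover then have "j \<noteq> (\<lambda>_. 0)" using zB2 by auto
          ultimately show "a j = restrict y2 F j" using x by (simp add: y2_def y1_def)
        qed
        moreover have "restrict y2 F \<in> proj X F" using y2 by (auto simp: proj_def)
        ultimately show ?thesis by blast
      qed
      have "PsiF F a (restrict y2 F) t - PsiF F a (restrict y1 F) t = g s t" for t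
      proof -
        have "PsiF F a (restrict y2 F) t - PsiF F a (restrict y1 F) t
           = (\<Sum>j\<in>F. if j = (\<lambda>_. 0) then ((if s = t then 1 else 0) - (if z = t then 1 else 0)) else (0::int))"
          unfolding PsiF_def sum_subtractf[symmetric]
          by (rule sum.cong) (auto simp: y2_def y1_def zB2)
        also have "\<dots> = (if s = t then 1 else 0) - (if z = t then 1 else 0)"
          using finF zF by simp
        finally show ?thesis by (auto simp: g_def)
      qed
      then have "v = (\<lambda>t. PsiF F a (restrict y2 F) t - PsiF F a (restrict y1 F) t)"
        using s(1) by auto
      then show "v \<in> gen_subgroup ?G"
        using gen_subgroup.diff[OF gen_subgroup.base[OF P2] gen_subgroup.base[OF P1]] by simp
    qed
    show "gen_subgroup ?G = HX X" using GE EG HE EH by blast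
  qed
qed

end
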